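(* In the $1/4$-rebate Marshallian Match, the truthful strategy profile, in which every bidder $i$ bids $b_{ij}(t)=v_{ij}$ on every asker $j$ and every asker $j$ asks $a_{ji}(t)=c_{ji}$ on every bidder $i$ at all times, is $4$-ex post stable.
   Context: Bipartite setting: bidders $i$ and askers $j$; bidder $i$ has value $v_{ij}\in\mathbb R$ for matching asker $j$ and asker $j$ has cost $c_{ji}\in\mathbb R$ for matching bidder $i$; surplus $s_{ij}=v_{ij}-c_{ji}$. $1/4$-rebate Marshallian Match: a global price $p(t)$ decreases continuously with $p(0)=+\infty$, $p(1)=0$. Each unmatched bidder $i$ maintains a bid $b_{ij}(t)\in\mathbb R$ on each feasible asker $j$, and each unmatched asker $j$ an ask $a_{ji}(t)\in\mathbb R$ on each feasible bidder $i$. As soon as an unmatched pair satisfies $b_{ij}(t)-a_{ji}(t)\ge p(t)$, they are matched and leave; the bidder pays $b_{ij}$, the asker receives $a_{ji}$, and each receives a rebate of $(b_{ij}-a_{ji})/4$. So the bidder's utility is $v_{ij}-b_{ij}+(b_{ij}-a_{ji})/4$ and the asker's is $a_{ji}-c_{ji}+(b_{ij}-a_{ji})/4$; unmatched agents get utility $0$. $k$-ex post stability: a profile $(b,a)$ is $k$-ex post stable if for every realization of types and every feasible bidder–asker pair $(i,j)$, $u_i(b,a)+u_j(b,a)\ge \frac1k s_{ij}$. *)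

theory Defs
  imports Complex_Main
begin

definition valid_price :: "(real \<Rightarrow> real) \<Rightarrow> bool" where
  "valid_price p \<longleftrightarrow> continuous_on {0<..1} p
     \<and> (\<forall>s t. 0 < s \<and> s < t \<and> t \<le> 1 \<longrightarrow> p t < p s)
     \<and> filterlim p at_top (at_right 0)
     \<and> p 1 = 0"

text \<open>A run (outcome) of the 1/4-rebate Marshallian Match.
  b i j t : bid of bidder i on asker j at time t; a j i t : ask of asker j on bidder i.
  m i = Some j : bidder i is matched with asker j, at time tau i.
  Condition 3 ("as soon as"): whenever a feasible pair clears the price at time t,
  at least one of the two has already left (been matched at a time <= t).\<close>
definition is_run ::
  "'i set \<Rightarrow> 'j set \<Rightarrow> ('i \<times> 'j) set \<Rightarrow> (real \<Rightarrow> real)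
   \<Rightarrow> ('i \<Rightarrow> 'j \<Rightarrow> real \<Rightarrow> real) \<Rightarrow> ('j \<Rightarrow> 'i \<Rightarrow> real \<Rightarrow> real)
   \<Rightarrow> ('i \<Rightarrow> 'j option) \<Rightarrow> ('i \<Rightarrow> real) \<Rightarrow> bool" where
  "is_run I J F p b a m tau \<longleftrightarrow>
     (\<forall>i j. m i = Some j \<longrightarrow> (i, j) \<in> F \<and> 0 < tau i \<and> tau i \<le> 1
              \<and> b i j (tau i) - a j i (tau i) \<ge> p (tau i))
   \<and> (\<forall>i i' j. m i = Some j \<and> m i' = Some j \<longrightarrow> i = i')
   \<and> (\<forall>i j t. (i, j) \<in> F \<and> 0 < t \<and> t \<le> 1 \<and> b i j t - a j i t \<ge> p t \<longrightarrow>
          (\<exists>j'. m i = Some j' \<and> tau i \<le> t) \<or> (\<exists>i'. m i' = Some j \<and> tau i' \<le> t))"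

definition u_bidder ::
  "('i \<Rightarrow> 'j \<Rightarrow> real) \<Rightarrow> ('i \<Rightarrow> 'j \<Rightarrow> real \<Rightarrow> real) \<Rightarrow> ('j \<Rightarrow> 'i \<Rightarrow> real \<Rightarrow> real)
   \<Rightarrow> ('i \<Rightarrow> 'j option) \<Rightarrow> ('i \<Rightarrow> real) \<Rightarrow> 'i \<Rightarrow> real" where
  "u_bidder v b a m tau i = (case m i of None \<Rightarrow> 0
     | Some j \<Rightarrow> v i j - b i j (tau i) + (b i j (tau i) - a j i (tau i)) / 4)"

definition u_asker ::
  "('j \<Rightarrow> 'i \<Rightarrow> real) \<Rightarrow> ('i \<Rightarrow> 'j \<Rightarrow> real \<Rightarrow> real) \<Rightarrow> ('j \<Rightarrow> 'i \<Rightarrow> real \<Rightarrow> real)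
   \<Rightarrow> ('i \<Rightarrow> 'j option) \<Rightarrow> ('i \<Rightarrow> real) \<Rightarrow> 'j \<Rightarrow> real" where
  "u_asker c b a m tau j = (if \<exists>i. m i = Some j then
     (let i = (THE i. m i = Some j) in
        a j i (tau i) - c j i + (b i j (tau i) - a j i (tau i)) / 4)
   else 0)"

text \<open>A strategy profile maps the realized types to bids/asks.
  k-ex post stability: for every realization of types (v, c), every run of the mechanism
  under the profile, and every feasible pair, u_i + u_j \<ge> s_ij / k.\<close>
definition ex_post_stable ::
  "real \<Rightarrow> 'i set \<Rightarrow> 'j set \<Rightarrow> ('i \<times> 'j) set \<Rightarrow> (real \<Rightarrow> real)
   \<Rightarrow> (('i \<Rightarrow> 'j \<Rightarrow> real) \<Rightarrow> ('j \<Rightarrow> 'i \<Rightarrow> real) \<Rightarrow> 'i \<Rightarrow> 'j \<Rightarrow> real \<Rightarrow> real)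
   \<Rightarrow> (('i \<Rightarrow> 'j \<Rightarrow> real) \<Rightarrow> ('j \<Rightarrow> 'i \<Rightarrow> real) \<Rightarrow> 'j \<Rightarrow> 'i \<Rightarrow> real \<Rightarrow> real) \<Rightarrow> bool" where
  "ex_post_stable k I J F p B A \<longleftrightarrow>
     (\<forall>v c m tau. is_run I J F p (B v c) (A v c) m tau \<longrightarrow>
        (\<forall>i j. (i, j) \<in> F \<longrightarrow>
           u_bidder v (B v c) (A v c) m tau i + u_asker c (B v c) (A v c) m tau j
             \<ge> (v i j - c j i) / k))"

definition truthful_bids :: "('i \<Rightarrow> 'j \<Rightarrow> real) \<Rightarrow> ('j \<Rightarrow> 'i \<Rightarrow> real) \<Rightarrow> 'i \<Rightarrow> 'j \<Rightarrow> real \<Rightarrow> real" where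
  "truthful_bids v c = (\<lambda>i j t. v i j)"

definition truthful_asks :: "('i \<Rightarrow> 'j \<Rightarrow> real) \<Rightarrow> ('j \<Rightarrow> 'i \<Rightarrow> real) \<Rightarrow> 'j \<Rightarrow> 'i \<Rightarrow> real \<Rightarrow> real" where
  "truthful_asks v c = (\<lambda>j i t. c j i)"

end

theory Submission
  imports Defs
begin

lemma price_nonneg:
  assumes "valid_price p" "0 < t" "t \<le> 1" shows "p t \<ge> 0"
proof (cases "t = 1")
  case True thus ?thesis using assms by (simp add: valid_price_def)
next
  case False
  hence "p 1 < p t" using assms unfolding valid_price_def by force
  thus ?thesis using assms by (simp add: valid_price_def)
qed

lemma price_hit:
  assumes "valid_price p" "s \<ge> 0"
  shows "\<exists>t. 0 < t \<and> t \<le> 1 \<and> p t = s"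
proof -
  have "eventually (\<lambda>x. s \<le> p x) (at_right 0)"
    using assms(1) unfolding valid_price_def filterlim_at_top by blast
  moreover have "eventually (\<lambda>x. x \<in> {0<..<1::real}) (at_right 0)"
    by (rule eventually_at_right_real) simp
  ultimately have "eventually (\<lambda>x. s \<le> p x \<and> x \<in> {0<..<1::real}) (at_right 0)"
    by (rule eventually_conj)
  moreover have "at_right (0::real) \<noteq> bot" by simp
  ultimately obtain a where a: "s \<le> p a" "0 < a" "a < 1"
    using eventually_happens' by fastforce
  have c: "continuous_on {a..1} p"
    using assms(1) a unfolding valid_price_def
    by (elim conjE continuous_on_subset) auto
  have "p 1 \<le> s" using assms by (simp add: valid_price_def)
  from IVT2'[OF this a(1) _ c] a obtain x where "a \<le> x" "x \<le> 1" "p x = s" by auto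
  thus ?thesis using a by (intro exI[of _ x]) auto
qed

theorem mainTheorem11:
  fixes I :: "'i set" and J :: "'j set" and F :: "('i \<times> 'j) set" and p :: "real \<Rightarrow> real"
  assumes "finite I" and "finite J" and "F \<subseteq> I \<times> J" and "valid_price p"
  shows "ex_post_stable 4 I J F p truthful_bids truthful_asks"
  unfolding ex_post_stable_def
proof (intro allI impI)
  fix v c m tau i j
  assume run: "is_run I J F p (truthful_bids v c) (truthful_asks v c) m tau" and ij: "(i, j) \<in> F"
  let ?b = "truthful_bids v c" and ?a = "truthful_asks v c"
  have R1: "\<And>i j. m i = Some j \<Longrightarrow> 0 < tau i \<and> tau i \<le> 1 \<and> v i j - c j i \<ge> p (tau i)"
    using run unfolding is_run_def truthful_bids_def truthful_asks_def by blast
  have R2: "\<And>i i' j. m i = Some j \<Longrightarrow> m i' = Some j \<Longrightarrow> i = i'"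
    using run unfolding is_run_def by blast
  have R3: "\<And>t. 0 < t \<Longrightarrow> t \<le> 1 \<Longrightarrow> v i j - c j i \<ge> p t \<Longrightarrow>
      (\<exists>j'. m i = Some j' \<and> tau i \<le> t) \<or> (\<exists>i'. m i' = Some j \<and> tau i' \<le> t)"
    using run ij unfolding is_run_def truthful_bids_def truthful_asks_def by blast
  have UB: "u_bidder v ?b ?a m tau i = (case m i of None \<Rightarrow> 0 | Some j' \<Rightarrow> (v i j' - c j' i)/4)"
    unfolding u_bidder_def truthful_bids_def truthful_asks_def
    by (cases "m i") (auto simp: field_simps)
  have UA: "u_asker c ?b ?a m tau j = (if \<exists>i'. m i' = Some j then
      (let i' = (THE i'. m i' = Some j) in (v i' j - c j i')/4) else 0)"
    unfolding u_asker_def truthful_bids_def truthful_asks_def by (simp add: field_simps Let_def)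
  have UAs: "u_asker c ?b ?a m tau j = (v i' j - c j i')/4" if "m i' = Some j" for i'
  proof -
    have "(THE i'. m i' = Some j) = i'" using that R2 by blast
    thus ?thesis using UA that by (auto simp: Let_def)
  qed
  have Bnn: "u_bidder v ?b ?a m tau i \<ge> 0"
  proof (cases "m i")
    case (Some j')
    with R1[OF Some] price_nonneg[OF assms(4)] have "v i j' - c j' i \<ge> 0" by force
    thus ?thesis using UB Some by simp
  qed (simp add: UB)
  have Ann: "u_asker c ?b ?a m tau j \<ge> 0"
  proof (cases "\<exists>i'. m i' = Some j")
    case True
    then obtain i' where S: "m i' = Some j" by blast
    with R1[OF S] price_nonneg[OF assms(4)] have "v i' j - c j i' \<ge> 0" by force
    thus ?thesis using UAs[OF S] by simp
  qed (simp add: UA)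
  show "u_bidder v ?b ?a m tau i + u_asker c ?b ?a m tau j \<ge> (v i j - c j i) / 4"
  proof (cases "v i j - c j i \<ge> 0")
    case False thus ?thesis using Bnn Ann by (simp add: field_simps)
  next
    case True
    obtain t where t: "0 < t" "t \<le> 1" "p t = v i j - c j i" using price_hit[OF assms(4) True] by blast
    have mono: "p t \<le> p x" if "0 < x" "x \<le> t" for x
      using assms(4) that t unfolding valid_price_def
      by (cases "x = t") (simp, smt (verit))
    from R3[OF t(1,2)] t(3) consider
      (a) j' where "m i = Some j'" "tau i \<le> t" | (b) i' where "m i' = Some j" "tau i' \<le> t" by auto
    thus ?thesis
    proof cases
      case a
      with R1[OF a(1)] mono[of "tau i"] t have "v i j' - c j' i \<ge> v i j - c j i" by force
      thus ?thesis using UB a Ann by simp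
    next
      case b
      with R1[OF b(1)] mono[of "tau i'"] t have "v i' j - c j i' \<ge> v i j - c j i" by force
      thus ?thesis using UAs[OF b(1)] Bnn by simp
    qed
  qed
qed

end
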